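(* For a topological space $X$ the following are equivalent: (1) $X$ is strongly star Hurewicz; (2) for every nonempty $A\subseteq X$ and every sequence $(\mathcal U_n:n\in\omega)$ of families of open subsets of $X$ with $\overline A\subseteq\bigcup\mathcal U_n$ for every $n$, there is a sequence $(F_n:n\in\omega)$ of finite subsets of $X$ such that every $x\in A$ belongs to $st(F_n,\mathcal U_n)$ for all but finitely many $n\in\omega$.
   Context: For a family $\mathcal U$ of subsets of $X$ and $A\subseteq X$, $st(A,\mathcal U)=\bigcup\{U\in\mathcal U: U\cap A\neq\emptyset\}$. $X$ is strongly star Hurewicz if for every sequence $(\mathcal U_n:n\in\omega)$ of open covers of $X$ there are finite $F_n\subseteq X$ such that every $x\in X$ belongs to $st(F_n,\mathcal U_n)$ for all but finitely many $n$. *)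

theory Defs
  imports "HOL-Analysis.Analysis"
begin

definition st :: "'a set \<Rightarrow> 'a set set \<Rightarrow> 'a set" where
  "st A U = \<Union>{V \<in> U. V \<inter> A \<noteq> {}}"

definition strongly_star_Hurewicz :: "'a topology \<Rightarrow> bool" where
  "strongly_star_Hurewicz X \<longleftrightarrow>
     (\<forall>U :: nat \<Rightarrow> 'a set set.
        (\<forall>n. (\<forall>V\<in>U n. openin X V) \<and> topspace X \<subseteq> \<Union>(U n)) \<longrightarrow>
        (\<exists>F :: nat \<Rightarrow> 'a set. (\<forall>n. finite (F n) \<and> F n \<subseteq> topspace X) \<and>
           (\<forall>x\<in>topspace X. \<forall>\<^sub>F n in sequentially. x \<in> st (F n) (U n))))"

end

theory Submission
  imports Defs
begin

theorem proposition4p1: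
  fixes X :: "'a topology"
  shows "strongly_star_Hurewicz X \<longleftrightarrow>
    (\<forall>A U. A \<subseteq> topspace X \<and> A \<noteq> {} \<and>
        (\<forall>n::nat. (\<forall>V\<in>U n. openin X V) \<and> X closure_of A \<subseteq> \<Union>(U n)) \<longrightarrow>
        (\<exists>F :: nat \<Rightarrow> 'a set. (\<forall>n. finite (F n) \<and> F n \<subseteq> topspace X) \<and>
           (\<forall>x\<in>A. \<forall>\<^sub>F n in sequentially. x \<in> st (F n) (U n))))"
proof
  assume H: "strongly_star_Hurewicz X"
  show "\<forall>A U. A \<subseteq> topspace X \<and> A \<noteq> {} \<and>
        (\<forall>n::nat. (\<forall>V\<in>U n. openin X V) \<and> X closure_of A \<subseteq> \<Union>(U n)) \<longrightarrow>
        (\<exists>F :: nat \<Rightarrow> 'a set. (\<forall>n. finite (F n) \<and> F n \<subseteq> topspace X) \<and>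
           (\<forall>x\<in>A. \<forall>\<^sub>F n in sequentially. x \<in> st (F n) (U n)))"
  proof (intro allI impI)
    fix A and U :: "nat \<Rightarrow> 'a set set"
    assume a: "A \<subseteq> topspace X \<and> A \<noteq> {} \<and>
        (\<forall>n::nat. (\<forall>V\<in>U n. openin X V) \<and> X closure_of A \<subseteq> \<Union>(U n))"
    define W where "W n = insert (topspace X - X closure_of A) (U n)" for n
    have op: "openin X (topspace X - X closure_of A)"
      by (simp add: openin_diff closedin_closure_of)
    have "\<forall>n. (\<forall>V\<in>W n. openin X V) \<and> topspace X \<subseteq> \<Union>(W n)"
    proof
      fix n
      show "(\<forall>V\<in>W n. openin X V) \<and> topspace X \<subseteq> \<Union>(W n)"
        using a op unfolding W_def by blast
    qed
    then have "\<exists>F :: nat \<Rightarrow> 'a set. (\<forall>n. finite (F n) \<and> F n \<subseteq> topspace X) \<and>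
           (\<forall>x\<in>topspace X. \<forall>\<^sub>F n in sequentially. x \<in> st (F n) (W n))"
      using H unfolding strongly_star_Hurewicz_def by (rule_tac mp[OF spec[of _ W]])
    then obtain F where F: "\<forall>n. finite (F n) \<and> F n \<subseteq> topspace X"
      and Fx: "\<forall>x\<in>topspace X. \<forall>\<^sub>F n in sequentially. x \<in> st (F n) (W n)"
      by blast
    have "\<forall>x\<in>A. \<forall>\<^sub>F n in sequentially. x \<in> st (F n) (U n)"
    proof
      fix x assume x: "x \<in> A"
      have xc: "x \<in> X closure_of A" using x a closure_of_subset by blast
      have "\<forall>\<^sub>F n in sequentially. x \<in> st (F n) (W n)" using Fx x a by (meson subsetD)
      then show "\<forall>\<^sub>F n in sequentially. x \<in> st (F n) (U n)"
        by (rule eventually_mono) (use xc in \<open>unfold st_def W_def, blast\<close>)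
    qed
    then show "\<exists>F :: nat \<Rightarrow> 'a set. (\<forall>n. finite (F n) \<and> F n \<subseteq> topspace X) \<and>
           (\<forall>x\<in>A. \<forall>\<^sub>F n in sequentially. x \<in> st (F n) (U n))"
      using F by blast
  qed
next
  assume H: "\<forall>A U. A \<subseteq> topspace X \<and> A \<noteq> {} \<and>
        (\<forall>n::nat. (\<forall>V\<in>U n. openin X V) \<and> X closure_of A \<subseteq> \<Union>(U n)) \<longrightarrow>
        (\<exists>F :: nat \<Rightarrow> 'a set. (\<forall>n. finite (F n) \<and> F n \<subseteq> topspace X) \<and>
           (\<forall>x\<in>A. \<forall>\<^sub>F n in sequentially. x \<in> st (F n) (U n)))"
  show "strongly_star_Hurewicz X"
    unfolding strongly_star_Hurewicz_def
  proof (intro allI impI)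
    fix U :: "nat \<Rightarrow> 'a set set"
    assume u: "\<forall>n. (\<forall>V\<in>U n. openin X V) \<and> topspace X \<subseteq> \<Union>(U n)"
    show "\<exists>F :: nat \<Rightarrow> 'a set. (\<forall>n. finite (F n) \<and> F n \<subseteq> topspace X) \<and>
           (\<forall>x\<in>topspace X. \<forall>\<^sub>F n in sequentially. x \<in> st (F n) (U n))"
    proof (cases "topspace X = {}")
      case True
      then show ?thesis by (intro exI[of _ "\<lambda>n. {}"]) auto
    next
      case False
      have "X closure_of topspace X = topspace X" by simp
      then have "\<forall>n::nat. (\<forall>V\<in>U n. openin X V) \<and> X closure_of (topspace X) \<subseteq> \<Union>(U n)"
        using u by simp
      then show ?thesis using H[rule_format, of "topspace X" U] False by blast
    qed
  qed
qed

end
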